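(* Let $m>0$. For every fixed $k\geq0$, the functions $$\widetilde S^{\mathrm o}_k(y)=\frac{\sinh\big(k\arcsin\frac{y}{m+1}\big)}{\cos\big(\arcsin\frac{y}{m+1}\big)},\qquad\widetilde S^{\mathrm e}_k(y)=\frac{\cosh\big(k\arcsin\frac{y}{m+1}\big)}{\cos\big(\arcsin\frac{y}{m+1}\big)}$$ have Taylor expansions in the variable $y\in[-1,1]$ (about $y=0$) with nonnegative coefficients. *)

theory Defs
  imports Complex_Main
begin

definition S_odd :: "real \<Rightarrow> real \<Rightarrow> real \<Rightarrow> real" where
  "S_odd m k y = sinh (k * arcsin (y / (m + 1))) / cos (arcsin (y / (m + 1)))"

definition S_even :: "real \<Rightarrow> real \<Rightarrow> real \<Rightarrow> real" where
  "S_even m k y = cosh (k * arcsin (y / (m + 1))) / cos (arcsin (y / (m + 1)))"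

definition nonneg_taylor_on_unit :: "(real \<Rightarrow> real) \<Rightarrow> bool" where
  "nonneg_taylor_on_unit f \<longleftrightarrow>
     (\<exists>c :: nat \<Rightarrow> real. (\<forall>n. c n \<ge> 0) \<and>
        (\<forall>y\<in>{-1..1}. (\<lambda>n. c n * y ^ n) sums f y))"

end

theory Submission imports Defs "HOL-Analysis.Analysis"
begin

fun bc :: "real \<Rightarrow> nat \<Rightarrow> real" where
  "bc k 0 = 1"
| "bc k (Suc 0) = k"
| "bc k (Suc (Suc n)) = ((real n + 1)^2 + k^2) / ((real n + 2) * (real n + 1)) * bc k n"

lemma bc_nonneg: "k \<ge> 0 \<Longrightarrow> bc k n \<ge> 0"
  by (induction k n rule: bc.induct) auto

lemma ratio_bound:
  fixes N k :: real and p :: nat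
  assumes N: "N \<ge> 1" and kp: "k^2 \<le> real p"
  shows "(N^2 + k^2) / ((N + 1) * N) * N ^ p \<le> (N + 2) ^ p"
proof -
  have "(N^2 + k^2) / ((N + 1) * N) \<le> (N^2 + k^2) / N^2"
    using N by (intro divide_left_mono) (auto simp: power2_eq_square intro: add_nonneg_nonneg)
  also have "\<dots> = 1 + k^2 / N^2" using N by (simp add: field_simps)
  also have "\<dots> \<le> 1 + real p / N"
  proof -
    have "k^2 / N^2 \<le> real p / N^2" using kp N by (simp add: divide_right_mono)
    also have "\<dots> \<le> real p / N" using N
      by (intro divide_left_mono) (auto simp: power2_eq_square)
    finally show ?thesis by simp
  qed
  also have "\<dots> \<le> 1 + real p * (2 / N)" using N by (simp add: field_simps)
  also have "\<dots> \<le> (1 + 2 / N) ^ p" using N by (intro Bernoulli_inequality) (simp add: field_simps)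
  finally have *: "(N^2 + k^2) / ((N + 1) * N) \<le> (1 + 2 / N) ^ p" .
  have "(N^2 + k^2) / ((N + 1) * N) * N ^ p \<le> (1 + 2 / N) ^ p * N ^ p"
    using * N by (intro mult_right_mono) auto
  also have "\<dots> = (N + 2) ^ p" using N by (simp add: power_mult_distrib[symmetric] field_simps)
  finally show ?thesis .
qed

lemma bc_bound:
  "k \<ge> 0 \<Longrightarrow> k^2 \<le> real p \<Longrightarrow> bc k n \<le> max 1 k * (real n + 1) ^ p"
proof (induction k n rule: bc.induct)
  case (1 k) then show ?case by simp
next
  case (2 k)
  have "k \<le> max 1 k * 1" by simp
  also have "\<dots> \<le> max 1 k * 2 ^ p" by (intro mult_left_mono) auto
  finally show ?case by simp
next
  case (3 k n)
  have IH: "bc k n \<le> max 1 k * (real n + 1) ^ p" using 3 by simp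
  have r0: "0 \<le> ((real n + 1)^2 + k^2) / ((real n + 2) * (real n + 1))" by simp
  have "bc k (Suc (Suc n)) \<le> ((real n + 1)^2 + k^2) / ((real n + 2) * (real n + 1)) * (max 1 k * (real n + 1) ^ p)"
    using mult_left_mono[OF IH r0] by simp
  also have "\<dots> = max 1 k * (((real n + 1)^2 + k^2) / (((real n + 1) + 1) * (real n + 1)) * (real n + 1) ^ p)"
    by (simp add: algebra_simps)
  also have "\<dots> \<le> max 1 k * ((real n + 1) + 2) ^ p"
    by (intro mult_left_mono ratio_bound) (use 3 in auto)
  finally show ?case by (simp add: algebra_simps)
qed


lemma poly_geom_summable:
  fixes r :: real
  assumes "\<bar>r\<bar> < 1"
  shows "summable (\<lambda>n. (real n + 1) ^ p * r ^ n)"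
proof -
  have lim: "(\<lambda>n. norm ((real n + 1) ^ p) / norm ((real (Suc n) + 1) ^ p)) \<longlonglongrightarrow> 1"
  proof -
    have "(\<lambda>n. real (Suc n) / real (Suc (Suc n))) \<longlonglongrightarrow> 1"
      using LIMSEQ_Suc[OF LIMSEQ_n_over_Suc_n] by simp
    hence "(\<lambda>n. (real (Suc n) / real (Suc (Suc n))) ^ p) \<longlonglongrightarrow> 1 ^ p"
      by (intro tendsto_power)
    moreover have "\<And>n. (real (Suc n) / real (Suc (Suc n))) ^ p = norm ((real n + 1) ^ p) / norm ((real (Suc n) + 1) ^ p)"
      by (simp add: power_divide add_ac)
    ultimately show ?thesis by simp
  qed
  have "conv_radius (\<lambda>n. (real n + 1) ^ p) = ereal 1"
    by (rule conv_radius_ratio_limit[OF refl _ lim]) simp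
  thus ?thesis using assms by (intro summable_in_conv_radius) simp
qed

lemma bc_summable:
  fixes x :: real
  assumes k: "k \<ge> 0" and x: "\<bar>x\<bar> < 1"
  shows "summable (\<lambda>n. bc k n * x ^ n)"
proof (rule summable_comparison_test)
  define p where "p = nat \<lceil>k^2\<rceil>"
  have kp: "k^2 \<le> real p" unfolding p_def by linarith
  show "summable (\<lambda>n. max 1 k * ((real n + 1) ^ p * \<bar>x\<bar> ^ n))"
    using poly_geom_summable[of "\<bar>x\<bar>" p] x by (intro summable_mult) simp
  show "\<exists>N. \<forall>n\<ge>N. norm (bc k n * x ^ n) \<le> max 1 k * ((real n + 1) ^ p * \<bar>x\<bar> ^ n)"
  proof (intro exI allI impI)
    fix n
    have "norm (bc k n * x ^ n) = bc k n * \<bar>x\<bar> ^ n" using bc_nonneg[OF k]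
      by (simp add: abs_mult power_abs)
    also have "\<dots> \<le> (max 1 k * (real n + 1) ^ p) * \<bar>x\<bar> ^ n"
      by (intro mult_right_mono bc_bound k kp) auto
    finally show "norm (bc k n * x ^ n) \<le> max 1 k * ((real n + 1) ^ p * \<bar>x\<bar> ^ n)"
      by (simp add: mult_ac)
  qed
qed


definition P0 :: "real \<Rightarrow> real \<Rightarrow> real" where "P0 k x = (\<Sum>n. bc k n * x ^ n)"
definition P1 :: "real \<Rightarrow> real \<Rightarrow> real" where "P1 k x = (\<Sum>n. diffs (bc k) n * x ^ n)"
definition P2 :: "real \<Rightarrow> real \<Rightarrow> real" where "P2 k x = (\<Sum>n. diffs (diffs (bc k)) n * x ^ n)"

lemma summ1: "k \<ge> 0 \<Longrightarrow> \<bar>x\<bar> < 1 \<Longrightarrow> summable (\<lambda>n. diffs (bc k) n * x ^ n)"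
  by (rule termdiff_converges[where K=1]) (auto intro: bc_summable)

lemma summ2: "k \<ge> 0 \<Longrightarrow> \<bar>x\<bar> < 1 \<Longrightarrow> summable (\<lambda>n. diffs (diffs (bc k)) n * x ^ n)"
  by (rule termdiff_converges[where K=1]) (auto intro: summ1)

lemma deriv0: "k \<ge> 0 \<Longrightarrow> \<bar>x\<bar> < 1 \<Longrightarrow> DERIV (P0 k) x :> P1 k x"
  unfolding P0_def[abs_def] P1_def
  by (rule termdiffs_strong'[where K=1]) (auto intro: bc_summable)

lemma deriv1: "k \<ge> 0 \<Longrightarrow> \<bar>x\<bar> < 1 \<Longrightarrow> DERIV (P1 k) x :> P2 k x"
  unfolding P1_def[abs_def] P2_def
  by (rule termdiffs_strong'[where K=1]) (auto intro: summ1)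

lemma ode:
  assumes k: "k \<ge> 0" and x: "\<bar>x\<bar> < 1"
  shows "(1 - x^2) * P2 k x - 3 * x * P1 k x - (1 + k^2) * P0 k x = 0"
proof -
  define b where "b = bc k"
  have A: "(\<lambda>n. diffs (diffs b) n * x ^ n) sums P2 k x"
    unfolding b_def P2_def using summ2[OF k x] by (simp add: summable_sums)
  have B: "(\<lambda>n. real n * (real n - 1) * b n * x ^ n) sums (x^2 * P2 k x)"
  proof -
    have "(\<lambda>n. x^2 * (diffs (diffs b) n * x ^ n)) sums (x^2 * P2 k x)"
      using sums_mult[OF A] .
    moreover have "\<And>i. x^2 * (diffs (diffs b) i * x ^ i) = real (i+2) * (real (i+2) - 1) * b (i+2) * x ^ (i+2)"
      by (simp add: diffs_def power_add algebra_simps power2_eq_square)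
    ultimately have "(\<lambda>i. real (i+2) * (real (i+2) - 1) * b (i+2) * x ^ (i+2)) sums (x^2 * P2 k x)"
      by simp
    thus ?thesis by (subst (asm) sums_iff_shift) (simp add: numeral_2_eq_2)
  qed
  have C: "(\<lambda>n. real n * b n * x ^ n) sums (x * P1 k x)"
  proof -
    have "(\<lambda>n. x * (diffs b n * x ^ n)) sums (x * P1 k x)"
      using sums_mult[OF summable_sums[OF summ1[OF k x]]] unfolding b_def P1_def .
    moreover have "\<And>i. x * (diffs b i * x ^ i) = real (i+1) * b (i+1) * x ^ (i+1)"
      by (simp add: diffs_def algebra_simps)
    ultimately have "(\<lambda>i. real (i+1) * b (i+1) * x ^ (i+1)) sums (x * P1 k x)"
      by simp
    thus ?thesis by (subst (asm) sums_iff_shift) simp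
  qed
  have D: "(\<lambda>n. b n * x ^ n) sums P0 k x"
    unfolding b_def P0_def using bc_summable[OF k x] by (simp add: summable_sums)
  have E: "(\<lambda>n. diffs (diffs b) n * x ^ n - real n * (real n - 1) * b n * x ^ n
           - 3 * (real n * b n * x ^ n) - (1 + k^2) * (b n * x ^ n))
       sums (P2 k x - x^2 * P2 k x - 3 * (x * P1 k x) - (1 + k^2) * P0 k x)"
    by (intro sums_diff sums_mult A B C D)
  have Z: "\<And>n. diffs (diffs b) n * x ^ n - real n * (real n - 1) * b n * x ^ n
           - 3 * (real n * b n * x ^ n) - (1 + k^2) * (b n * x ^ n) = 0"
  proof -
    fix n
    have "diffs (diffs b) n = (real n + 1) * (real n + 2) * b (Suc (Suc n))"
      by (simp add: diffs_def algebra_simps)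
    also have "\<dots> = ((real n + 1)^2 + k^2) * b n"
      unfolding b_def by simp
    finally show "diffs (diffs b) n * x ^ n - real n * (real n - 1) * b n * x ^ n
           - 3 * (real n * b n * x ^ n) - (1 + k^2) * (b n * x ^ n) = 0"
      by (simp add: algebra_simps power2_eq_square)
  qed
  from E have "(\<lambda>n. 0::real) sums (P2 k x - x^2 * P2 k x - 3 * (x * P1 k x) - (1 + k^2) * P0 k x)"
    by (simp only: Z)
  hence "P2 k x - x^2 * P2 k x - 3 * (x * P1 k x) - (1 + k^2) * P0 k x = 0"
    using sums_unique sums_zero by metis
  thus ?thesis by (simp add: algebra_simps)
qed


lemma identity:
  assumes k: "k \<ge> 0" and x: "\<bar>x\<bar> < 1"
  shows "sqrt (1 - x^2) * P0 k x = exp (k * arcsin x)"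
proof -
  define s where "s x = sqrt (1 - x^2)" for x :: real
  define M where "M x = (1 - x^2) * P1 k x - x * P0 k x - k * s x * P0 k x" for x
  have spos: "s y > 0" if "\<bar>y\<bar> < 1" for y
  proof -
    have "y^2 < 1" using that by (simp add: abs_square_less_1)
    thus ?thesis unfolding s_def by simp
  qed
  have ssq: "s y ^ 2 = 1 - y^2" if "\<bar>y\<bar> < 1" for y
  proof -
    have "y^2 < 1" using that by (simp add: abs_square_less_1)
    thus ?thesis unfolding s_def by simp
  qed
  have ds: "DERIV s y :> - y / s y" if y: "\<bar>y\<bar> < 1" for y
  proof -
    have "y^2 < 1" using that by (simp add: abs_square_less_1)
    have "DERIV (\<lambda>y. sqrt (1 - y^2)) y :> inverse (sqrt (1 - y^2)) / 2 * (- (2 * y))"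
      by (rule DERIV_chain2[where f=sqrt]) (use \<open>y^2 < 1\<close> in \<open>auto intro!: DERIV_real_sqrt derivative_eq_intros\<close>)
    thus ?thesis unfolding s_def[abs_def] by (simp add: field_simps)
  qed
  have dM: "DERIV M y :> - (k / s y) * M y" if y: "\<bar>y\<bar> < 1" for y
  proof -
    have "DERIV M y :> ((- (2 * y)) * P1 k y + (1 - y^2) * P2 k y - (P0 k y + y * P1 k y)
             - k * ((- y / s y) * P0 k y + s y * P1 k y))"
      unfolding M_def[abs_def]
      apply (rule derivative_eq_intros deriv0[OF k y] deriv1[OF k y] ds[OF y] refl)+
      apply (simp_all add: algebra_simps)
      done
    moreover have "((- (2 * y)) * P1 k y + (1 - y^2) * P2 k y - (P0 k y + y * P1 k y)
             - k * ((- y / s y) * P0 k y + s y * P1 k y)) = - (k / s y) * M y"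
    proof -
      have o: "(1 - y^2) * P2 k y = 3 * y * P1 k y + (1 + k^2) * P0 k y" using ode[OF k y] by simp
      have "s y \<noteq> 0" using spos[OF y] by simp
      have e: "\<And>z. s y * (s y * z) = (1 - y*y) * z" using ssq[OF y]
        by (simp add: power2_eq_square mult.assoc[symmetric])
      show ?thesis unfolding M_def o using \<open>s y \<noteq> 0\<close>
        by (simp add: field_simps power2_eq_square) (simp add: algebra_simps e)
    qed
    ultimately show ?thesis by simp
  qed
  have darc: "DERIV arcsin y :> 1 / s y" if y: "\<bar>y\<bar> < 1" for y
    using DERIV_arcsin[of y] y unfolding s_def by (simp add: divide_inverse abs_less_iff)
  have M0: "M 0 = 0"
  proof -
    have "P1 k 0 = k" unfolding P1_def by (simp add: diffs_def)
    moreover have "P0 k 0 = 1" unfolding P0_def by simp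
    ultimately show ?thesis unfolding M_def s_def by simp
  qed
  have Mz: "M y = 0" if y: "\<bar>y\<bar> < 1" for y
  proof -
    define N where "N y = M y * exp (k * arcsin y)" for y
    have dN: "DERIV N z :> 0" if z: "z \<in> {-1<..<1}" for z
    proof -
      have z': "\<bar>z\<bar> < 1" using z by auto
      have "DERIV N z :> (- (k / s z) * M z) * exp (k * arcsin z) + M z * (exp (k * arcsin z) * (k * (1 / s z)))"
        unfolding N_def[abs_def]
        by (rule dM[OF z'] darc[OF z'] | rule derivative_eq_intros refl)+ simp
      thus ?thesis by (simp add: algebra_simps)
    qed
    have "N y = N 0" by (rule DERIV_isconst3[of "-1" 1]) (use y dN in auto)
    hence "M y * exp (k * arcsin y) = 0" unfolding N_def using M0 by simp
    thus ?thesis by simp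
  qed
  define th where "th = arcsin"
  have dth: "DERIV th y :> 1 / s y" if y: "\<bar>y\<bar> < 1" for y unfolding th_def using darc[OF y] .
  define Z where "Z y = s y * P0 k y * exp ((- k) * th y)" for y
  have dZ: "DERIV Z z :> 0" if z: "z \<in> {-1<..<1}" for z
  proof -
    have z': "\<bar>z\<bar> < 1" using z by auto
    have "DERIV Z z :> ((- z / s z) * P0 k z + s z * P1 k z) * exp ((- k) * th z)
           + s z * P0 k z * (exp ((- k) * th z) * ((- k) * (1 / s z)))"
      unfolding Z_def[abs_def]
      by (rule ds[OF z'] deriv0[OF k z'] dth[OF z'] | rule derivative_eq_intros refl)+ simp
    moreover have "((- z / s z) * P0 k z + s z * P1 k z) * exp ((- k) * th z)
           + s z * P0 k z * (exp ((- k) * th z) * ((- k) * (1 / s z))) = 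
           exp ((- k) * th z) * (M z / s z)"
    proof -
      have "s z \<noteq> 0" using spos[OF z'] by simp
      have e: "\<And>w. s z * (s z * w) = (1 - z*z) * w" using ssq[OF z']
        by (simp add: power2_eq_square mult.assoc[symmetric])
      show ?thesis unfolding M_def using \<open>s z \<noteq> 0\<close>
        by (simp add: field_simps power2_eq_square) (simp add: algebra_simps e)
    qed
    ultimately show ?thesis using Mz[OF z'] by simp
  qed
  have "Z x = Z 0" by (rule DERIV_isconst3[of "-1" 1]) (use x dZ in auto)
  moreover have "Z 0 = 1" unfolding Z_def s_def P0_def th_def by simp
  ultimately have "s x * P0 k x * exp (- (k * arcsin x)) = 1" unfolding Z_def th_def by simp
  hence "s x * P0 k x = exp (k * arcsin x)"
    by (simp add: exp_minus field_simps)
  thus ?thesis unfolding s_def .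
qed


lemma P0_eq:
  assumes k: "k \<ge> 0" and t: "\<bar>t\<bar> < 1"
  shows "P0 k t = exp (k * arcsin t) / cos (arcsin t)"
proof -
  have "t^2 < 1" using t by (simp add: abs_square_less_1)
  hence "sqrt (1 - t^2) > 0" by simp
  moreover have "cos (arcsin t) = sqrt (1 - t^2)" using t by (intro cos_arcsin) auto
  ultimately show ?thesis using identity[OF k t] by (simp add: field_simps)
qed

lemma sums_parts:
  assumes k: "k \<ge> 0" and m: "m > 0" and y: "y \<in> {-1..1::real}"
  defines "t \<equiv> y / (m + 1)"
  shows "(\<lambda>n. bc k n * t ^ n) sums (exp (k * arcsin t) / cos (arcsin t))"
    and "(\<lambda>n. bc k n * (-t) ^ n) sums (exp (- (k * arcsin t)) / cos (arcsin t))"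
proof -
  have t: "\<bar>t\<bar> < 1" using y m unfolding t_def by (auto simp: abs_if field_simps)
  show "(\<lambda>n. bc k n * t ^ n) sums (exp (k * arcsin t) / cos (arcsin t))"
    using summable_sums[OF bc_summable[OF k t]] P0_eq[OF k t] unfolding P0_def by simp
  have t': "\<bar>-t\<bar> < 1" using t by simp
  have "arcsin (-t) = - arcsin t" using t by (intro arcsin_minus) auto
  moreover have "cos (arcsin (-t)) = cos (arcsin t)" using t
    by (simp add: cos_arcsin abs_le_iff)
  ultimately show "(\<lambda>n. bc k n * (-t) ^ n) sums (exp (- (k * arcsin t)) / cos (arcsin t))"
    using summable_sums[OF bc_summable[OF k t']] P0_eq[OF k t'] unfolding P0_def by simp
qed

theorem mainTheorem7:
  fixes m k :: real
  assumes "m > 0" and "k \<ge> 0"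
  shows "nonneg_taylor_on_unit (S_odd m k) \<and> nonneg_taylor_on_unit (S_even m k)"
proof
  have mp: "m + 1 > 0" using assms by simp
  show "nonneg_taylor_on_unit (S_odd m k)"
    unfolding nonneg_taylor_on_unit_def
  proof (intro exI conjI allI ballI)
    fix n show "(if odd n then bc k n / (m + 1) ^ n else 0) \<ge> 0"
      using bc_nonneg[OF assms(2)] mp by simp
  next
    fix y :: real assume y: "y \<in> {-1..1}"
    define t where "t = y / (m + 1)"
    have "(\<lambda>n. (bc k n * t ^ n - bc k n * (-t) ^ n) / 2) sums
         ((exp (k * arcsin t) / cos (arcsin t) - exp (- (k * arcsin t)) / cos (arcsin t)) / 2)"
      using sums_parts[OF assms(2,1) y] unfolding t_def by (intro sums_divide sums_diff)
    moreover have "(exp (k * arcsin t) / cos (arcsin t) - exp (- (k * arcsin t)) / cos (arcsin t)) / 2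
        = S_odd m k y"
    proof -
      have "\<bar>t\<bar> < 1" using y mp assms(1) unfolding t_def by (auto simp: abs_if field_simps)
      hence "cos (arcsin t) \<noteq> 0" by (intro cos_arcsin_nonzero) auto
      thus ?thesis unfolding S_odd_def t_def[symmetric] sinh_field_def by (simp add: field_simps)
    qed
    moreover have "(bc k n * t ^ n - bc k n * (-t) ^ n) / 2 = (if odd n then bc k n / (m + 1) ^ n else 0) * y ^ n" for n
      unfolding t_def using mp by (cases "even n") (auto simp: power_divide field_simps)
    ultimately show "(\<lambda>n. (if odd n then bc k n / (m + 1) ^ n else 0) * y ^ n) sums S_odd m k y"
      by simp
  qed
  show "nonneg_taylor_on_unit (S_even m k)"
    unfolding nonneg_taylor_on_unit_def
  proof (intro exI conjI allI ballI)
    fix n show "(if even n then bc k n / (m + 1) ^ n else 0) \<ge> 0"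
      using bc_nonneg[OF assms(2)] mp by simp
  next
    fix y :: real assume y: "y \<in> {-1..1}"
    define t where "t = y / (m + 1)"
    have "(\<lambda>n. (bc k n * t ^ n + bc k n * (-t) ^ n) / 2) sums
         ((exp (k * arcsin t) / cos (arcsin t) + exp (- (k * arcsin t)) / cos (arcsin t)) / 2)"
      using sums_parts[OF assms(2,1) y] unfolding t_def by (intro sums_divide sums_add)
    moreover have "(exp (k * arcsin t) / cos (arcsin t) + exp (- (k * arcsin t)) / cos (arcsin t)) / 2
        = S_even m k y"
    proof -
      have "\<bar>t\<bar> < 1" using y mp assms(1) unfolding t_def by (auto simp: abs_if field_simps)
      hence "cos (arcsin t) \<noteq> 0" by (intro cos_arcsin_nonzero) auto
      thus ?thesis unfolding S_even_def t_def[symmetric] cosh_field_def by (simp add: field_simps)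
    qed
    moreover have "(bc k n * t ^ n + bc k n * (-t) ^ n) / 2 = (if even n then bc k n / (m + 1) ^ n else 0) * y ^ n" for n
      unfolding t_def using mp by (cases "even n") (auto simp: power_divide field_simps)
    ultimately show "(\<lambda>n. (if even n then bc k n / (m + 1) ^ n else 0) * y ^ n) sums S_even m k y"
      by simp
  qed
qed

end
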